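(* Let $V$ be a finite set, $A,B\subseteq V$, ${\bf t}=(t_i)_{i\in V}$ and $\lambda$ complex numbers. Then $$\int\mathcal{D}_{B,{\bf t}}(\psi,\bar\psi)\,f_A^{(\lambda)}=\Big(\prod_{i\in B\setminus A}t_i\Big)\Big[f_{A\setminus B}^{(\lambda)}+\Big(\sum_{i\in B\cap A}(t_i-\lambda)\Big)\tau_{A\setminus B}\Big].$$ In particular, $\int\mathcal{D}_{A,{\bf t}}(\psi,\bar\psi)\,f_A^{(\lambda)}=\lambda+\sum_{i\in A}(t_i-\lambda)$.
   Context: For each $i\in V$ let $\psi_i,\bar\psi_i$ be anticommuting generators of a Grassmann algebra over $\mathbb{C}$; $\tau_A=\prod_{i\in A}\bar\psi_i\psi_i$ ($\tau_\emptyset=1$); $f_A^{(\lambda)}=\lambda(1-|A|)\tau_A+\sum_{i\in A}\tau_{A\setminus\{i\}}-\sum_{i,j\in A,\ i\neq j}\bar\psi_i\psi_j\,\tau_{A\setminus\{i,j\}}$ (so $f_\emptyset^{(\lambda)}=\lambda$). For $B\subseteq V$, $\mathcal{D}_{B,{\bf t}}(\psi,\bar\psi)=\prod_{i\in B}d\psi_i\,d\bar\psi_i\,e^{t_i\bar\psi_i\psi_i}$, integrating only over the variables at vertices of $B$, with Berezin conventions $\int d\psi_i\,d\bar\psi_i\,\bar\psi_i\psi_i=1$ and the integral of $1,\psi_i,\bar\psi_i$ equal to $0$. *)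

theory Defs
  imports Complex_Main "HOL-Library.Product_Lexorder"
begin

text \<open>Grassmann algebra over the complex numbers with generators indexed by
  ('v \<times> bool): (i, False) is psi_i and (i, True) is psibar_i.
  An element is represented by its coefficient function on monomials; a monomial
  is a finite set of generators, read as the product of its generators in
  increasing order (lexicographic order on 'v \<times> bool).\<close>

type_synonym 'v grass = "('v \<times> bool) set \<Rightarrow> complex"

definition gzero :: "'v grass" where "gzero = (\<lambda>S. 0)"
definition gconst :: "complex \<Rightarrow> 'v grass" where
  "gconst c = (\<lambda>S. if S = {} then c else 0)"
definition gone :: "'v grass" where "gone = gconst 1"
definition gen :: "'v \<times> bool \<Rightarrow> 'v grass" where
  "gen g = (\<lambda>S. if S = {g} then 1 else 0)"
definition gadd :: "'v grass \<Rightarrow> 'v grass \<Rightarrow> 'v grass" where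
  "gadd F G = (\<lambda>S. F S + G S)"
definition gsmult :: "complex \<Rightarrow> 'v grass \<Rightarrow> 'v grass" where
  "gsmult c F = (\<lambda>S. c * F S)"
definition gminus :: "'v grass \<Rightarrow> 'v grass \<Rightarrow> 'v grass" where
  "gminus F G = (\<lambda>S. F S - G S)"
definition gsum :: "('i \<Rightarrow> 'v grass) \<Rightarrow> 'i set \<Rightarrow> 'v grass" where
  "gsum f I = (\<lambda>S. \<Sum>i\<in>I. f i S)"

text \<open>Number of transpositions needed to bring (monomial T)(monomial U) into
  increasing order.\<close>
definition ginv :: "('v::linorder \<times> bool) set \<Rightarrow> ('v \<times> bool) set \<Rightarrow> nat" where
  "ginv T U = card {(a, b). a \<in> T \<and> b \<in> U \<and> b < a}"

definition gmul :: "'v::linorder grass \<Rightarrow> 'v grass \<Rightarrow> 'v grass" where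
  "gmul F G = (\<lambda>S. if finite S then
      (\<Sum>T\<in>Pow S. (-1) ^ ginv T (S - T) * F T * G (S - T)) else 0)"

definition gpow :: "'v::linorder grass \<Rightarrow> nat \<Rightarrow> 'v grass" where
  "gpow F k = (gmul F ^^ k) gone"

definition gprod :: "('v::linorder \<Rightarrow> 'v grass) \<Rightarrow> 'v set \<Rightarrow> 'v grass" where
  "gprod f A = foldr gmul (map f (sorted_list_of_set A)) gone"

text \<open>Exponential; for F without constant term the series terminates:
  on a monomial S only the powers k \<le> card S contribute.\<close>
definition gexp :: "'v::linorder grass \<Rightarrow> 'v grass" where
  "gexp F = (\<lambda>S. \<Sum>k\<le>card S. gpow F k S / of_nat (fact k))"

definition psi :: "'v \<Rightarrow> 'v grass" where "psi i = gen (i, False)"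
definition psibar :: "'v \<Rightarrow> 'v grass" where "psibar i = gen (i, True)"

definition tau :: "'v::linorder set \<Rightarrow> 'v grass" where
  "tau A = gprod (\<lambda>i. gmul (psibar i) (psi i)) A"

definition fA :: "complex \<Rightarrow> 'v::linorder set \<Rightarrow> 'v grass" where
  "fA lam A = gminus
     (gadd (gsmult (lam * (1 - of_nat (card A))) (tau A)) (gsum (\<lambda>i. tau (A - {i})) A))
     (gsum (\<lambda>(i, j). gmul (gmul (psibar i) (psi j)) (tau (A - {i, j})))
           {(i, j). i \<in> A \<and> j \<in> A \<and> i \<noteq> j})"

text \<open>Left derivative with respect to generator g; Berezin integration
  \<open>\<integral> d\<psi>_i d\<psibar>_i\<close> is \<open>\<partial>_{\<psi>_i} \<partial>_{\<psibar>_i}\<close>,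
  so that the integral of psibar_i psi_i is 1 and of 1, psi_i, psibar_i is 0.\<close>
definition gderiv :: "'v::linorder \<times> bool \<Rightarrow> 'v grass \<Rightarrow> 'v grass" where
  "gderiv g F = (\<lambda>S. if g \<notin> S then (-1) ^ card {h\<in>S. h < g} * F (insert g S) else 0)"

definition berezin1 :: "'v::linorder \<Rightarrow> 'v grass \<Rightarrow> 'v grass" where
  "berezin1 i F = gderiv (i, False) (gderiv (i, True) F)"

text \<open>\<open>\<integral> D_{B,t} F\<close>: multiply by the weight
  \<open>\<Prod>_{i\<in>B} e^{t_i psibar_i psi_i}\<close> and integrate over the variables at B.\<close>
definition berezin :: "'v::linorder set \<Rightarrow> ('v \<Rightarrow> complex) \<Rightarrow> 'v grass \<Rightarrow> 'v grass" where
  "berezin B t F = foldr berezin1 (sorted_list_of_set B)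
     (gmul (gprod (\<lambda>i. gexp (gsmult (t i) (gmul (psibar i) (psi i)))) B) F)"

end

theory Submission
  imports Defs
begin

definition gmono :: "('v \<times> bool) set \<Rightarrow> complex \<Rightarrow> 'v grass" where
  "gmono M c = (\<lambda>S. if S = M then c else 0)"
definition PP :: "'v set \<Rightarrow> ('v \<times> bool) set" where "PP C = C \<times> UNIV"

lemma gmul_mono_left:
  "gmul (gmono M c) G S = (if finite S \<and> M \<subseteq> S then (-1) ^ ginv M (S - M) * c * G (S - M) else 0)"
proof (cases "finite S")
  case True
  have eq: "\<And>T. (-1) ^ ginv T (S - T) * gmono M c T * G (S - T) =
      (if M = T then (-1) ^ ginv M (S - M) * c * G (S - M) else 0)"
    by (auto simp: gmono_def)
  have "gmul (gmono M c) G S = (\<Sum>T\<in>Pow S. if M = T then (-1) ^ ginv M (S - M) * c * G (S - M) else 0)"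
    unfolding gmul_def using True by (simp only: eq if_True)
  also have "\<dots> = (if M \<subseteq> S then (-1) ^ ginv M (S - M) * c * G (S - M) else 0)"
    using True by simp
  finally show ?thesis using True by simp
qed (simp add: gmul_def)

lemma mono_mul:
  "gmul (gmono M c) (gmono N d) =
     (if M \<inter> N = {} \<and> finite M \<and> finite N then gmono (M \<union> N) ((-1) ^ ginv M N * c * d) else gzero)"
proof (rule ext)
  fix S
  show "gmul (gmono M c) (gmono N d) S = (if M \<inter> N = {} \<and> finite M \<and> finite N then gmono (M \<union> N) ((-1) ^ ginv M N * c * d) else gzero) S"
    unfolding gmul_mono_left by (auto simp: gmono_def gzero_def Diff_triv)
qed

lemma ginv_PP_right_even:
  fixes X :: "('v::linorder \<times> bool) set"
  assumes "X \<inter> PP E = {}"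
  shows "even (ginv X (PP E))"
proof -
  define R where "R = {(a, k). a \<in> X \<and> k \<in> E \<and> (k, False) < a}"
  define h :: "(('v \<times> bool) \<times> 'v) \<times> bool \<Rightarrow> ('v \<times> bool) \<times> ('v \<times> bool)"
    where "h = (\<lambda>((a, k), v). (a, (k, v)))"
  have "bij_betw h (R \<times> UNIV) {(a, b). a \<in> X \<and> b \<in> PP E \<and> b < a}"
  by (rule bij_betw_byWitness[where f' = "\<lambda>(a, (k, v)). ((a, k), v)"])
     (use assms in \<open>auto simp: h_def R_def PP_def less_prod_def less_bool_def\<close>)
  then have "ginv X (PP E) = card (R \<times> (UNIV :: bool set))"
    unfolding ginv_def by (simp add: bij_betw_same_card)
  then show ?thesis by (simp add: card_cartesian_product)
qed

lemma ginv_PP_left_even: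
  fixes Y :: "('v::linorder \<times> bool) set"
  assumes "Y \<inter> PP C = {}"
  shows "even (ginv (PP C) Y)"
proof -
  define R where "R = {(k, b). b \<in> Y \<and> k \<in> C \<and> b < (k, False)}"
  define h :: "('v \<times> ('v \<times> bool)) \<times> bool \<Rightarrow> ('v \<times> bool) \<times> ('v \<times> bool)"
    where "h = (\<lambda>((k, b), v). ((k, v), b))"
  have "bij_betw h (R \<times> UNIV) {(a, b). a \<in> PP C \<and> b \<in> Y \<and> b < a}"
  by (rule bij_betw_byWitness[where f' = "\<lambda>((k, v), b). ((k, b), v)"])
     (use assms in \<open>auto simp: h_def R_def PP_def less_prod_def less_bool_def\<close>)
  then have "ginv (PP C) Y = card (R \<times> (UNIV :: bool set))"
    unfolding ginv_def by (simp add: bij_betw_same_card)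
  then show ?thesis by (simp add: card_cartesian_product)
qed

lemma gone_mono: "gone = gmono {} 1"
  by (auto simp: gone_def gconst_def gmono_def)

lemma gen_mono: "gen g = gmono {g} 1"
  by (auto simp: gen_def gmono_def)

lemma ginv_empty_right [simp]: "ginv M {} = 0" by (simp add: ginv_def)
lemma ginv_empty_left [simp]: "ginv {} M = 0" by (simp add: ginv_def)

lemma PP_empty [simp]: "PP {} = {}" by (simp add: PP_def)
lemma finite_PP [simp]: "finite C \<Longrightarrow> finite (PP C)" by (simp add: PP_def)
lemma PP_insert: "PP (insert x C) = PP {x} \<union> PP C" by (auto simp: PP_def)
lemma PP_single: "PP {i} = {(i, False), (i, True)}" by (auto simp: PP_def)

lemma psibar_psi: "gmul (psibar i) (psi i) = gmono (PP {i}) (-1)"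
proof -
  have "ginv {(i, True)} {(i, False)} = 1"
  proof -
    have "{(a, b). a \<in> {(i, True)} \<and> b \<in> {(i, False)} \<and> b < a} = {((i, True), (i, False))}"
      by (auto simp: less_prod_def less_bool_def)
    then show ?thesis by (simp add: ginv_def)
  qed
  then show ?thesis
    by (simp add: psibar_def psi_def gen_mono mono_mul PP_single insert_commute)
qed

lemma tau_list:
  "distinct xs \<Longrightarrow> foldr gmul (map (\<lambda>i. gmul (psibar i) (psi i)) xs) gone = gmono (PP (set xs)) ((-1) ^ length xs)"
proof (induction xs)
  case Nil
  then show ?case by (simp add: gone_mono)
next
  case (Cons x xs)
  have d: "PP {x} \<inter> PP (set xs) = {}" using Cons.prems by (auto simp: PP_def)
  have e: "even (ginv (PP {x}) (PP (set xs)))"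
    by (rule ginv_PP_left_even) (use d in auto)
  show ?case using Cons d e
    by (simp add: psibar_psi mono_mul PP_insert[of x "set xs"])
qed

lemma tau_mono: "finite A \<Longrightarrow> tau A = gmono (PP A) ((-1) ^ card A)"
  unfolding tau_def gprod_def
  by (simp add: tau_list distinct_sorted_list_of_set set_sorted_list_of_set length_sorted_list_of_set)

lemma gmul_gzero_right: "gmul F gzero = gzero"
  by (auto simp: gmul_def gzero_def)

lemma gpow_mono:
  assumes "finite M" "M \<noteq> {}"
  shows "gpow (gmono M a) (Suc (Suc k)) = gzero" and "gpow (gmono M a) 0 = gone"
    and "gpow (gmono M a) (Suc 0) = gmono M a"
proof -
  have 1: "gpow (gmono M a) (Suc 0) = gmono M a"
    using assms by (simp add: gpow_def gone_mono mono_mul)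
  then show "gpow (gmono M a) (Suc 0) = gmono M a" .
  show "gpow (gmono M a) 0 = gone" by (simp add: gpow_def)
  show "gpow (gmono M a) (Suc (Suc k)) = gzero"
  proof (induction k)
    case 0
    have "gpow (gmono M a) (Suc (Suc 0)) = gmul (gmono M a) (gpow (gmono M a) (Suc 0))"
      by (simp add: gpow_def)
    then show ?case using 1 assms by (simp add: mono_mul)
  next
    case (Suc k)
    have "gpow (gmono M a) (Suc (Suc (Suc k))) = gmul (gmono M a) (gpow (gmono M a) (Suc (Suc k)))"
      by (simp add: gpow_def)
    then show ?case using Suc by (simp add: gmul_gzero_right)
  qed
qed

lemma sum_atMost_two:
  assumes "\<And>k. g (Suc (Suc k)) = (0::complex)"
  shows "(\<Sum>k\<le>n. g k) = g 0 + (if 1 \<le> n then g 1 else 0)"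
proof (induction n)
  case (Suc n)
  then show ?case
    by (cases n) (auto simp: assms)
qed simp

lemma gexp_mono:
  assumes "finite M" "M \<noteq> {}"
  shows "gexp (gmono M a) = gadd gone (gmono M a)"
proof (rule ext)
  fix S
  have "gexp (gmono M a) S = gpow (gmono M a) 0 S / of_nat (fact 0) +
      (if 1 \<le> card S then gpow (gmono M a) 1 S / of_nat (fact 1) else 0)"
    unfolding gexp_def
    by (rule sum_atMost_two) (simp add: gpow_mono(1)[OF assms] gzero_def)
  also have "\<dots> = gone S + (if 1 \<le> card S then gmono M a S else 0)"
    using gpow_mono(2,3)[OF assms] by (simp add: One_nat_def)
  also have "\<dots> = gadd gone (gmono M a) S"
  proof (cases "S = M")
    case True
    then have "1 \<le> card S" using assms by (simp add: Suc_le_eq card_gt_0_iff)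
    then show ?thesis by (simp add: gadd_def)
  qed (simp add: gadd_def gmono_def)
  finally show "gexp (gmono M a) S = gadd gone (gmono M a) S" .
qed

lemma gsmult_mono: "gsmult c (gmono M d) = gmono M (c * d)"
  by (auto simp: gsmult_def gmono_def)

lemma weight_factor:
  "gexp (gsmult (t i) (gmul (psibar i) (psi i))) = gadd gone (gmono (PP {i}) (- t i))"
  by (simp add: psibar_psi gsmult_mono gexp_mono PP_single)

lemma gmul_gadd_left: "gmul (gadd F G) H = gadd (gmul F H) (gmul G H)"
  by (auto simp: gmul_def gadd_def sum.distrib algebra_simps)

lemma gmul_gsum_right: "finite I \<Longrightarrow> gmul F (gsum h I) = gsum (\<lambda>x. gmul F (h x)) I"
  apply (rule ext)
  subgoal for S
    by (cases "finite S") (auto simp: gmul_def gsum_def sum_distrib_left intro: sum.swap)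
  done

lemma gsum_cong: "(\<And>x. x \<in> I \<Longrightarrow> h x = h' x) \<Longrightarrow> gsum h I = gsum h' I"
  by (auto simp: gsum_def intro!: sum.cong ext)

lemma weight_list:
  "distinct xs \<Longrightarrow> foldr gmul (map (\<lambda>i. gadd gone (gmono (PP {i}) (- t i))) xs) gone =
     gsum (\<lambda>C. gmono (PP C) (\<Prod>i\<in>C. - t i)) (Pow (set xs))"
proof (induction xs)
  case Nil
  then show ?case by (auto simp: gone_mono gsum_def)
next
  case (Cons x xs)
  let ?X = "set xs"
  have fin: "finite (Pow ?X)" by simp
  have A: "gmul gone (gsum (\<lambda>C. gmono (PP C) (\<Prod>i\<in>C. - t i)) (Pow ?X)) =
      gsum (\<lambda>C. gmono (PP C) (\<Prod>i\<in>C. - t i)) (Pow ?X)"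
    unfolding gmul_gsum_right[OF fin]
    by (rule gsum_cong) (auto simp: gone_mono mono_mul dest: finite_subset)
  have B: "gmul (gmono (PP {x}) (- t x)) (gsum (\<lambda>C. gmono (PP C) (\<Prod>i\<in>C. - t i)) (Pow ?X)) =
      gsum (\<lambda>C. gmono (PP (insert x C)) (\<Prod>i\<in>insert x C. - t i)) (Pow ?X)"
    unfolding gmul_gsum_right[OF fin]
  proof (rule gsum_cong)
    fix C assume C: "C \<in> Pow ?X"
    then have xC: "x \<notin> C" and fC: "finite C" using Cons.prems by (auto intro: finite_subset)
    have d: "PP {x} \<inter> PP C = {}" using xC by (auto simp: PP_def)
    have e: "even (ginv (PP {x}) (PP C))" by (rule ginv_PP_left_even) (use d in auto)
    show "gmul (gmono (PP {x}) (- t x)) (gmono (PP C) (\<Prod>i\<in>C. - t i)) =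
        gmono (PP (insert x C)) (\<Prod>i\<in>insert x C. - t i)"
      using d e xC fC by (simp add: mono_mul PP_insert[of x C])
  qed
  have disj: "Pow ?X \<inter> insert x ` Pow ?X = {}" using Cons.prems by auto
  have inj: "inj_on (insert x) (Pow ?X)" using Cons.prems
    by (auto simp: inj_on_def insert_ident)
  have C: "gsum (\<lambda>C. gmono (PP C) (\<Prod>i\<in>C. - t i)) (Pow (insert x ?X)) =
      gadd (gsum (\<lambda>C. gmono (PP C) (\<Prod>i\<in>C. - t i)) (Pow ?X))
           (gsum (\<lambda>C. gmono (PP (insert x C)) (\<Prod>i\<in>insert x C. - t i)) (Pow ?X))"
    unfolding Pow_insert gsum_def gadd_def
    by (rule ext, subst sum.union_disjoint) (use disj inj in \<open>auto simp: sum.reindex\<close>)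
  show ?case using Cons by (simp add: gmul_gadd_left A B C)
qed

lemma weight_mono: "finite B \<Longrightarrow>
  gprod (\<lambda>i. gexp (gsmult (t i) (gmul (psibar i) (psi i)))) B =
    gsum (\<lambda>C. gmono (PP C) (\<Prod>i\<in>C. - t i)) (Pow B)"
  unfolding gprod_def weight_factor
  by (simp add: weight_list distinct_sorted_list_of_set set_sorted_list_of_set)

definition fin_supp :: "'v grass \<Rightarrow> bool" where
  "fin_supp G \<longleftrightarrow> (\<forall>S. infinite S \<longrightarrow> G S = 0)"

lemma fin_supp_gmul: "fin_supp (gmul F G)"
  by (simp add: fin_supp_def gmul_def)

lemma berezin1_formula:
  fixes G :: "'v::linorder grass"
  assumes "fin_supp G"
  shows "berezin1 i G = (\<lambda>S. if (i, False) \<notin> S \<and> (i, True) \<notin> S then - G (S \<union> PP {i}) else 0)"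
proof (rule ext)
  fix S :: "('v \<times> bool) set"
  show "berezin1 i G S = (if (i, False) \<notin> S \<and> (i, True) \<notin> S then - G (S \<union> PP {i}) else 0)"
  proof (cases "(i, False) \<notin> S \<and> (i, True) \<notin> S")
    case True
    have U: "insert (i, True) (insert (i, False) S) = S \<union> PP {i}" by (auto simp: PP_single)
    show ?thesis
    proof (cases "finite S")
      case fin: True
      have eq: "{h. (h = (i, False) \<or> h \<in> S) \<and> h < (i, True)} = insert (i, False) {h \<in> S. h < (i, False)}"
        using True by (auto simp: less_prod_def less_bool_def)
      have c: "card {h. (h = (i, False) \<or> h \<in> S) \<and> h < (i, True)} = Suc (card {h \<in> S. h < (i, False)})"
        unfolding eq using True fin by (subst card_insert_disjoint) auto
      show ?thesis using True
        by (simp add: berezin1_def gderiv_def c U)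
    next
      case False
      then have "G (S \<union> PP {i}) = 0" using assms by (simp add: fin_supp_def)
      then show ?thesis using True by (simp add: berezin1_def gderiv_def U)
    qed
  qed (auto simp: berezin1_def gderiv_def)
qed

lemma berezin_list:
  fixes G :: "'v::linorder grass"
  assumes "distinct xs" "fin_supp G"
  shows "foldr berezin1 xs G =
    (\<lambda>S. if S \<inter> PP (set xs) = {} then (-1) ^ length xs * G (S \<union> PP (set xs)) else 0)"
  using assms(1)
proof (induction xs)
  case Nil
  then show ?case by auto
next
  case (Cons x xs)
  let ?H = "\<lambda>S. if S \<inter> PP (set xs) = {} then (-1) ^ length xs * G (S \<union> PP (set xs)) else 0"
  have fs: "fin_supp ?H" using assms(2) by (auto simp: fin_supp_def)
  have IH: "foldr berezin1 xs G = ?H" using Cons by simp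
  show ?case
  proof (rule ext)
    fix S :: "('v \<times> bool) set"
    have u: "S \<union> PP {x} \<union> PP (set xs) = S \<union> PP (set (x # xs))" by (auto simp: PP_def)
    have i: "((S \<union> PP {x}) \<inter> PP (set xs) = {}) = (S \<inter> PP (set xs) = {})"
      using Cons.prems by (auto simp: PP_def)
    have j: "((x, False) \<notin> S \<and> (x, True) \<notin> S \<and> S \<inter> PP (set xs) = {}) = (S \<inter> PP (set (x # xs)) = {})"
      apply (auto simp: PP_def)
      by (metis (full_types))
    show "foldr berezin1 (x # xs) G S =
      (if S \<inter> PP (set (x # xs)) = {} then (-1) ^ length (x # xs) * G (S \<union> PP (set (x # xs))) else 0)"
      using j by (auto simp: IH berezin1_formula[OF fs] u i)
  qed
qed

lemma gmul_gsum_left: "finite I \<Longrightarrow> gmul (gsum h I) F = gsum (\<lambda>x. gmul (h x) F) I"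
  apply (rule ext)
  subgoal for S
    by (cases "finite S") (auto simp: gmul_def gsum_def sum_distrib_left sum_distrib_right intro: sum.swap)
  done

lemma Bz:
  fixes F :: "'v::linorder grass"
  assumes "finite B"
  shows "berezin B t F = (\<lambda>S. if S \<inter> PP B = {} \<and> finite S then
      (-1) ^ card B * (\<Sum>C\<in>Pow B. (\<Prod>i\<in>C. - t i) * F (S \<union> PP (B - C))) else 0)"
proof (rule ext)
  fix S :: "('v \<times> bool) set"
  let ?W = "gsum (\<lambda>C. gmono (PP C) (\<Prod>i\<in>C. - t i)) (Pow B)"
  have b: "berezin B t F S = (if S \<inter> PP B = {} then (-1) ^ card B * gmul ?W F (S \<union> PP B) else 0)"
    unfolding berezin_def weight_mono[OF assms]
    by (simp add: berezin_list fin_supp_gmul distinct_sorted_list_of_set set_sorted_list_of_set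
        length_sorted_list_of_set assms)
  show "berezin B t F S = (if S \<inter> PP B = {} \<and> finite S then
      (-1) ^ card B * (\<Sum>C\<in>Pow B. (\<Prod>i\<in>C. - t i) * F (S \<union> PP (B - C))) else 0)"
  proof (cases "S \<inter> PP B = {} \<and> finite S")
    case True
    have "gmul ?W F (S \<union> PP B) = (\<Sum>C\<in>Pow B. gmul (gmono (PP C) (\<Prod>i\<in>C. - t i)) F (S \<union> PP B))"
      by (subst gmul_gsum_left) (simp_all add: assms gsum_def)
    also have "\<dots> = (\<Sum>C\<in>Pow B. (\<Prod>i\<in>C. - t i) * F (S \<union> PP (B - C)))"
    proof (rule sum.cong)
      fix C assume C: "C \<in> Pow B"
      have d: "(S \<union> PP B) - PP C = S \<union> PP (B - C)" using True C by (auto simp: PP_def)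
      have e: "even (ginv (PP C) (S \<union> PP (B - C)))"
        by (rule ginv_PP_left_even) (use True C in \<open>auto simp: PP_def\<close>)
      have s: "PP C \<subseteq> S \<union> PP B" using C by (auto simp: PP_def)
      show "gmul (gmono (PP C) (\<Prod>i\<in>C. - t i)) F (S \<union> PP B) = (\<Prod>i\<in>C. - t i) * F (S \<union> PP (B - C))"
        using True e s assms by (simp add: gmul_mono_left d)
    qed simp
    finally show ?thesis using True b by simp
  next
    case False
    moreover have "infinite S \<Longrightarrow> gmul ?W F (S \<union> PP B) = 0" by (simp add: gmul_def)
    ultimately show ?thesis using b by auto
  qed
qed

lemma PP_inj: "PP A = PP A' \<Longrightarrow> A = A'"
  by (auto simp: PP_def)

lemma key_eq:
  assumes "S \<inter> PP B = {}" "C \<subseteq> B" "X \<inter> PP B = {}"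
  shows "(S \<union> PP (B - C) = X \<union> PP E) \<longleftrightarrow> (C = B - E \<and> S = X \<union> PP (E - B))"
proof
  assume H: "S \<union> PP (B - C) = X \<union> PP E"
  have "(S \<union> PP (B - C)) \<inter> PP B = PP (B - C)" using assms(1) by (auto simp: PP_def)
  moreover have "(X \<union> PP E) \<inter> PP B = PP (E \<inter> B)" using assms(3) by (auto simp: PP_def)
  ultimately have "PP (B - C) = PP (E \<inter> B)" using H by simp
  then have "B - C = E \<inter> B" by (rule PP_inj)
  then have 1: "C = B - E" using assms(2) by auto
  have "(S \<union> PP (B - C)) - PP B = S" using assms(1) by (auto simp: PP_def)
  moreover have "(X \<union> PP E) - PP B = X \<union> PP (E - B)" using assms(3) by (auto simp: PP_def)
  ultimately have "S = X \<union> PP (E - B)" using H by simp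
  with 1 show "C = B - E \<and> S = X \<union> PP (E - B)" by simp
next
  assume "C = B - E \<and> S = X \<union> PP (E - B)"
  then show "S \<union> PP (B - C) = X \<union> PP E" by (auto simp: PP_def)
qed

lemma Bz_mono:
  fixes X :: "('v::linorder \<times> bool) set"
  assumes "finite B" "finite E" "finite X" "X \<inter> PP B = {}"
  shows "berezin B t (gmono (X \<union> PP E) c) =
    gmono (X \<union> PP (E - B)) ((-1) ^ card B * (\<Prod>i\<in>B - E. - t i) * c)"
proof (rule ext)
  fix S :: "('v \<times> bool) set"
  show "berezin B t (gmono (X \<union> PP E) c) S = gmono (X \<union> PP (E - B)) ((-1) ^ card B * (\<Prod>i\<in>B - E. - t i) * c) S"
  proof (cases "S \<inter> PP B = {} \<and> finite S")
    case True
    have "(\<Sum>C\<in>Pow B. (\<Prod>i\<in>C. - t i) * gmono (X \<union> PP E) c (S \<union> PP (B - C))) =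
        (\<Sum>C\<in>Pow B. if C = B - E then (if S = X \<union> PP (E - B) then (\<Prod>i\<in>C. - t i) * c else 0) else 0)"
      by (rule sum.cong) (use True assms key_eq[of S B _ X E] in \<open>auto simp: gmono_def\<close>)
    also have "\<dots> = (if S = X \<union> PP (E - B) then (\<Prod>i\<in>B - E. - t i) * c else 0)"
      using assms by simp
    finally show ?thesis using True assms by (simp add: Bz gmono_def)
  next
    case False
    moreover have "(X \<union> PP (E - B)) \<inter> PP B = {}" using assms by (auto simp: PP_def)
    moreover have "finite (X \<union> PP (E - B))" using assms by simp
    ultimately show ?thesis using assms by (auto simp: Bz gmono_def)
  qed
qed

lemma Bz_mismatch:
  assumes "finite B" "k \<in> B" "((k, False) \<in> M) \<noteq> ((k, True) \<in> M)"
  shows "berezin B t (gmono M c) = gzero"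
proof (rule ext)
  fix S
  have "\<And>C. C \<in> Pow B \<Longrightarrow> S \<inter> PP B = {} \<Longrightarrow> S \<union> PP (B - C) \<noteq> M"
  proof -
    fix C assume C: "C \<in> Pow B" and S: "S \<inter> PP B = {}"
    show "S \<union> PP (B - C) \<noteq> M"
    proof (cases "k \<in> C")
      case True
      then have "(k, False) \<notin> S \<union> PP (B - C)" "(k, True) \<notin> S \<union> PP (B - C)"
        using S assms(2) by (auto simp: PP_def)
      then show ?thesis using assms(3) by auto
    next
      case False
      then have "(k, False) \<in> S \<union> PP (B - C)" "(k, True) \<in> S \<union> PP (B - C)"
        using assms(2) by (auto simp: PP_def)
      then show ?thesis using assms(3) by auto
    qed
  qed
  then show "berezin B t (gmono M c) S = gzero S"
    using assms(1) by (auto simp: Bz gmono_def gzero_def)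
qed

lemma card_split: "finite A \<Longrightarrow> card A = card (A - B) + card (A \<inter> B)"
  by (metis Int_Diff_disjoint Un_Diff_Int card_Un_disjoint finite_Diff finite_Int inf_commute)

lemma neg1_sq: "(-1::complex) ^ n * (-1) ^ n = 1"
  by (induct n) auto

lemma coeff_alg:
  assumes "finite B" "finite E"
  shows "(-1) ^ card B * (\<Prod>i\<in>B - E. - t i) * ((-1) ^ card E * d) =
     (\<Prod>i\<in>B - E. t i) * ((-1) ^ card (E - B) * (d::complex))"
proof -
  have "card B = card (B - E) + card (B \<inter> E)" "card E = card (E - B) + card (B \<inter> E)"
    using assms card_split[of B E] card_split[of E B] by (auto simp: Int_commute)
  then show ?thesis
    by (simp add: prod_uminus power_add algebra_simps)
qed

lemma Bz_tau:
  assumes "finite B" "finite E"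
  shows "berezin B t (tau E) = gsmult (\<Prod>i\<in>B - E. t i) (tau (E - B))"
proof -
  have "berezin B t (tau E) = berezin B t (gmono ({} \<union> PP E) ((-1) ^ card E))"
    using assms by (simp add: tau_mono)
  also have "\<dots> = gmono ({} \<union> PP (E - B)) ((-1) ^ card B * (\<Prod>i\<in>B - E. - t i) * (-1) ^ card E)"
    by (rule Bz_mono) (use assms in auto)
  also have "\<dots> = gsmult (\<Prod>i\<in>B - E. t i) (tau (E - B))"
    using coeff_alg[OF assms, of t 1] assms by (simp add: tau_mono gsmult_mono)
  finally show ?thesis .
qed

abbreviation "pairt i j E \<equiv> gmul (gmul (psibar i) (psi j)) (tau E)"

lemma pair_mono:
  assumes "finite E" "i \<notin> E" "j \<notin> E"
  shows "pairt i j E = gmono ({(i, True), (j, False)} \<union> PP E)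
     ((-1) ^ ginv {(i, True)} {(j, False)} * (-1) ^ card E)"
proof -
  have d: "{(i, True), (j, False)} \<inter> PP E = {}" using assms by (auto simp: PP_def)
  have e: "even (ginv {(i, True), (j, False)} (PP E))" by (rule ginv_PP_right_even[OF d])
  show ?thesis using assms d e
    by (simp add: psibar_def psi_def gen_mono mono_mul tau_mono insert_commute)
qed

lemma Bz_pair:
  assumes "finite B" "finite E" "i \<notin> E" "j \<notin> E" "i \<noteq> j"
  shows "berezin B t (pairt i j E) =
    (if i \<in> B \<or> j \<in> B then gzero else gsmult (\<Prod>i\<in>B - E. t i) (pairt i j (E - B)))"
proof (cases "i \<in> B \<or> j \<in> B")
  case True
  show ?thesis
  proof (cases "i \<in> B")
    case True
    have "berezin B t (pairt i j E) = gzero" unfolding pair_mono[OF assms(2-4)]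
      by (rule Bz_mismatch[OF assms(1) True]) (use assms in \<open>auto simp: PP_def\<close>)
    then show ?thesis using True by simp
  next
    case False
    then have "j \<in> B" using \<open>i \<in> B \<or> j \<in> B\<close> by simp
    have "berezin B t (pairt i j E) = gzero" unfolding pair_mono[OF assms(2-4)]
      by (rule Bz_mismatch[OF assms(1) \<open>j \<in> B\<close>]) (use assms in \<open>auto simp: PP_def\<close>)
    then show ?thesis using \<open>j \<in> B\<close> by simp
  qed
next
  case False
  have "berezin B t (pairt i j E) = gmono ({(i, True), (j, False)} \<union> PP (E - B))
     ((-1) ^ card B * (\<Prod>i\<in>B - E. - t i) * ((-1) ^ ginv {(i, True)} {(j, False)} * (-1) ^ card E))"
    unfolding pair_mono[OF assms(2-4)]
    by (rule Bz_mono) (use assms False in \<open>auto simp: PP_def\<close>)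
  also have "\<dots> = gmono ({(i, True), (j, False)} \<union> PP (E - B))
     ((\<Prod>i\<in>B - E. t i) * ((-1) ^ ginv {(i, True)} {(j, False)} * (-1) ^ card (E - B)))"
  proof -
    let ?s = "(-1::complex) ^ ginv {(i, True)} {(j, False)}"
    have k: "(-1) ^ card B * (\<Prod>i\<in>B - E. - t i) * (-1) ^ card E = (\<Prod>i\<in>B - E. t i) * (-1) ^ card (E - B)"
      using coeff_alg[OF assms(1,2), of t 1] by simp
    have a1: "(-1) ^ card B * (\<Prod>i\<in>B - E. - t i) * (?s * (-1) ^ card E) =
        ((-1) ^ card B * (\<Prod>i\<in>B - E. - t i) * (-1) ^ card E) * ?s" by (simp only: ac_simps)
    have a2: "(\<Prod>i\<in>B - E. t i) * (?s * (-1) ^ card (E - B)) = ((\<Prod>i\<in>B - E. t i) * (-1) ^ card (E - B)) * ?s"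
      by (simp only: ac_simps)
    show ?thesis by (simp only: a1 a2 k)
  qed
  also have "\<dots> = gsmult (\<Prod>i\<in>B - E. t i) (pairt i j (E - B))"
    using assms by (simp add: pair_mono gsmult_mono)
  finally show ?thesis using False by simp
qed

lemma Bz_gadd: "finite B \<Longrightarrow> berezin B t (gadd F G) = gadd (berezin B t F) (berezin B t G)"
  by (auto simp: Bz gadd_def sum.distrib algebra_simps)
lemma Bz_gminus: "finite B \<Longrightarrow> berezin B t (gminus F G) = gminus (berezin B t F) (berezin B t G)"
  by (auto simp: Bz gminus_def sum_subtractf algebra_simps)
lemma Bz_gsmult: "finite B \<Longrightarrow> berezin B t (gsmult c F) = gsmult c (berezin B t F)"
  by (auto simp: Bz gsmult_def sum_distrib_left algebra_simps)
lemma Bz_gsum: "finite B \<Longrightarrow> finite I \<Longrightarrow> berezin B t (gsum h I) = gsum (\<lambda>x. berezin B t (h x)) I"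
proof (rule ext)
  fix S
  assume fB: "finite B" and fI: "finite I"
  have sw: "(\<Sum>x\<in>I. \<Sum>C\<in>Pow B. (\<Prod>i\<in>C. - t i) * h x (S \<union> PP (B - C))) =
      (\<Sum>C\<in>Pow B. (\<Prod>i\<in>C. - t i) * (\<Sum>x\<in>I. h x (S \<union> PP (B - C))))"
    by (subst sum.swap) (simp add: sum_distrib_left)
  show "berezin B t (gsum h I) S = gsum (\<lambda>x. berezin B t (h x)) I S"
  proof (cases "S \<inter> PP B = {} \<and> finite S")
    case True
    then show ?thesis using sw fB by (simp add: Bz gsum_def sum_distrib_left[symmetric])
  next
    case False
    show ?thesis unfolding Bz[OF fB] gsum_def by (simp only: if_not_P[OF False] sum.neutral_const)
  qed
qed

lemma fin_OD: "finite A \<Longrightarrow> finite {(i, j). i \<in> A \<and> j \<in> A \<and> i \<noteq> j}"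
  by (rule finite_subset[of _ "A \<times> A"]) auto

lemma Bz_fA:
  fixes A B :: "'v::linorder set"
  assumes fA: "finite A" and fB: "finite B"
  shows "berezin B t (fA lam A) =
           gsmult (\<Prod>i\<in>B - A. t i)
             (gadd (fA lam (A - B)) (gsmult (\<Sum>i\<in>B \<inter> A. t i - lam) (tau (A - B))))"
proof -
  let ?OD = "\<lambda>A. {(i, j). i \<in> A \<and> j \<in> A \<and> i \<noteq> j}"
  let ?P = "\<Prod>i\<in>B - A. t i"
  have s1: "gsum (\<lambda>i. berezin B t (tau (A - {i}))) A =
     gadd (gsum (\<lambda>i. gsmult ?P (tau (A - B - {i}))) (A - B))
          (gsmult (\<Sum>i\<in>A \<inter> B. t i) (gsmult ?P (tau (A - B))))"
  proof -
    have "gsum (\<lambda>i. berezin B t (tau (A - {i}))) A = gsum (\<lambda>i. gsmult (\<Prod>i\<in>B - (A - {i}). t i) (tau (A - {i} - B))) A"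
      by (rule gsum_cong) (simp add: Bz_tau fA fB)
    also have "\<dots> = gadd (gsum (\<lambda>i. gsmult ?P (tau (A - B - {i}))) (A - B))
          (gsmult (\<Sum>i\<in>A \<inter> B. t i) (gsmult ?P (tau (A - B))))"
    proof (rule ext)
      fix S
      have split: "A = (A - B) \<union> (A \<inter> B)" by auto
      have "(\<Sum>i\<in>A. (\<Prod>i\<in>B - (A - {i}). t i) * tau (A - {i} - B) S) =
         (\<Sum>i\<in>A - B. (\<Prod>i\<in>B - (A - {i}). t i) * tau (A - {i} - B) S) +
         (\<Sum>i\<in>A \<inter> B. (\<Prod>i\<in>B - (A - {i}). t i) * tau (A - {i} - B) S)"
        by (subst split, subst sum.union_disjoint) (use fA in auto)
      also have "(\<Sum>i\<in>A - B. (\<Prod>i\<in>B - (A - {i}). t i) * tau (A - {i} - B) S) =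
          (\<Sum>i\<in>A - B. ?P * tau (A - B - {i}) S)"
      proof (rule sum.cong)
        fix i assume "i \<in> A - B"
        then have "B - (A - {i}) = B - A" "A - {i} - B = A - B - {i}" by auto
        then show "(\<Prod>i\<in>B - (A - {i}). t i) * tau (A - {i} - B) S = ?P * tau (A - B - {i}) S" by simp
      qed simp
      also have "(\<Sum>i\<in>A \<inter> B. (\<Prod>i\<in>B - (A - {i}). t i) * tau (A - {i} - B) S) =
          (\<Sum>i\<in>A \<inter> B. t i * (?P * tau (A - B) S))"
      proof (rule sum.cong)
        fix i assume i: "i \<in> A \<inter> B"
        then have "B - (A - {i}) = insert i (B - A)" "A - {i} - B = A - B" by auto
        moreover have "(\<Prod>i\<in>insert i (B - A). t i) = t i * ?P" using i fB by simp
        ultimately show "(\<Prod>i\<in>B - (A - {i}). t i) * tau (A - {i} - B) S = t i * (?P * tau (A - B) S)" by simp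
      qed simp
      finally show "gsum (\<lambda>i. gsmult (\<Prod>i\<in>B - (A - {i}). t i) (tau (A - {i} - B))) A S =
          gadd (gsum (\<lambda>i. gsmult ?P (tau (A - B - {i}))) (A - B))
          (gsmult (\<Sum>i\<in>A \<inter> B. t i) (gsmult ?P (tau (A - B)))) S"
        by (simp add: gsum_def gsmult_def gadd_def sum_distrib_right)
    qed
    finally show ?thesis .
  qed
  have s2: "gsum (\<lambda>x. berezin B t ((\<lambda>(i, j). pairt i j (A - {i, j})) x)) (?OD A) =
      gsum (\<lambda>(i, j). gsmult ?P (pairt i j (A - B - {i, j}))) (?OD (A - B))"
  proof (rule ext)
    fix S
    show "gsum (\<lambda>x. berezin B t ((\<lambda>(i, j). pairt i j (A - {i, j})) x)) (?OD A) S =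
      gsum (\<lambda>(i, j). gsmult ?P (pairt i j (A - B - {i, j}))) (?OD (A - B)) S"
      unfolding gsum_def
    proof (rule sum.mono_neutral_cong_right)
      show "finite (?OD A)" by (rule fin_OD[OF fA])
      show "?OD (A - B) \<subseteq> ?OD A" by auto
      show "\<forall>x\<in>?OD A - ?OD (A - B). berezin B t ((\<lambda>(i, j). pairt i j (A - {i, j})) x) S = 0"
        using fA fB by (auto simp: Bz_pair gzero_def)
      show "berezin B t ((\<lambda>(i, j). pairt i j (A - {i, j})) x) S =
          (case x of (i, j) \<Rightarrow> gsmult ?P (pairt i j (A - B - {i, j}))) S" if "x \<in> ?OD (A - B)" for x
      proof -
        obtain i j where x: "x = (i, j)" "i \<in> A - B" "j \<in> A - B" "i \<noteq> j" using \<open>x \<in> ?OD (A - B)\<close> by auto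
        then have "B - (A - {i, j}) = B - A" "A - {i, j} - B = A - B - {i, j}" by auto
        then show ?thesis using x fA fB by (simp add: Bz_pair)
      qed
    qed
  qed
  have L: "berezin B t (fA lam A) =
     gminus (gadd (gsmult (lam * (1 - of_nat (card A))) (gsmult ?P (tau (A - B))))
        (gadd (gsum (\<lambda>i. gsmult ?P (tau (A - B - {i}))) (A - B))
          (gsmult (\<Sum>i\<in>A \<inter> B. t i) (gsmult ?P (tau (A - B))))))
      (gsum (\<lambda>(i, j). gsmult ?P (pairt i j (A - B - {i, j}))) (?OD (A - B)))"
    unfolding fA_def Bz_gminus[OF fB] Bz_gadd[OF fB] Bz_gsmult[OF fB] Bz_gsum[OF fB fA]
      Bz_gsum[OF fB fin_OD[OF fA]] Bz_tau[OF fB fA] s1 s2 ..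
  have cA: "card A = card (A - B) + card (A \<inter> B)" by (rule card_split[OF fA])
  have sAB: "(\<Sum>i\<in>B \<inter> A. t i - lam) = (\<Sum>i\<in>A \<inter> B. t i) - of_nat (card (A \<inter> B)) * lam"
    by (simp add: sum_subtractf Int_commute)
  show ?thesis
    unfolding L
  proof (rule ext)
    fix S
    show "gminus (gadd (gsmult (lam * (1 - of_nat (card A))) (gsmult ?P (tau (A - B))))
        (gadd (gsum (\<lambda>i. gsmult ?P (tau (A - B - {i}))) (A - B))
          (gsmult (\<Sum>i\<in>A \<inter> B. t i) (gsmult ?P (tau (A - B))))))
      (gsum (\<lambda>(i, j). gsmult ?P (pairt i j (A - B - {i, j}))) (?OD (A - B))) S =
      gsmult ?P (gadd (fA lam (A - B)) (gsmult (\<Sum>i\<in>B \<inter> A. t i - lam) (tau (A - B)))) S"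
      unfolding fA_def sAB
      by (simp add: gminus_def gadd_def gsmult_def gsum_def split_def sum_distrib_left sum_distrib_right cA algebra_simps)
  qed
qed

theorem corollary5p2:
  fixes V A B :: "'v::linorder set" and t :: "'v \<Rightarrow> complex" and lam :: complex
  assumes "finite V" and "A \<subseteq> V" and "B \<subseteq> V"
  shows "berezin B t (fA lam A) =
           gsmult (\<Prod>i\<in>B - A. t i)
             (gadd (fA lam (A - B)) (gsmult (\<Sum>i\<in>B \<inter> A. t i - lam) (tau (A - B)))) \<and>
         berezin A t (fA lam A) = gconst (lam + (\<Sum>i\<in>A. t i - lam))"
proof
  have fA: "finite A" and fB: "finite B" using assms finite_subset by auto
  show "berezin B t (fA lam A) =
           gsmult (\<Prod>i\<in>B - A. t i)
             (gadd (fA lam (A - B)) (gsmult (\<Sum>i\<in>B \<inter> A. t i - lam) (tau (A - B))))"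
    by (rule Bz_fA[OF fA fB])
  have t0: "tau {} = gmono {} 1" by (simp add: tau_mono)
  show "berezin A t (fA lam A) = gconst (lam + (\<Sum>i\<in>A. t i - lam))"
    unfolding Bz_fA[OF fA fA]
    by (rule ext) (simp add: fA_def t0 gminus_def gadd_def gsmult_def gsum_def gmono_def gconst_def)
qed

end
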